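(* Let $G$ be an ordered graph, and let $e,f\in E(G)$ be edges which both contain the vertex $\mathrm{v}_G(f)$ and satisfy $\mathrm{ht}_G(f)\prec_{\mathrm{lex}}\mathrm{ht}_G(e)$. Then $e<_G f$.
   Context: An ordered graph is a finite simple graph $G$ equipped with a total order $\le_G$ on $E(G)$ and a total order $\le^V_G$ on $V(G)$. Let $\mathbb N=\{1,2,\dots\}$. Define $\preceq_{\mathrm{lex}}$ on $\mathbb N\times V(G)$ by $(i,v)\preceq_{\mathrm{lex}}(i',v')$ iff $i<i'$, or $i=i'$ and $v\le^V_G v'$. The height table $\mathrm{HT}(G)$ is a partially filled array indexed by $\mathbb N\times V(G)$, built by going through all $(i,v)$ in $\preceq_{\mathrm{lex}}$-increasing order and setting the entry at $(i,v)$ to be the $\le_G$-largest edge containing $v$ not yet entered into the table (blank if none remain). Every edge is entered exactly once; $\mathrm{ht}_G(e)=(\mathrm{h}_G(e),\mathrm{v}_G(e))$ is the position of $e$, with $\mathrm{h}_G(e)$ its row and $\mathrm{v}_G(e)$ its column. *)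

theory Defs
  imports Main
begin

text \<open>An ordered graph: finite vertex set V, edges are 2-element subsets of V,
  rV a total order on V, rE a total order on E (as relations, (a,b) \<in> r meaning a \<le> b).\<close>

definition ordered_graph :: "'v set \<Rightarrow> 'v set set \<Rightarrow> ('v \<times> 'v) set \<Rightarrow> ('v set \<times> 'v set) set \<Rightarrow> bool" where
  "ordered_graph V E rV rE \<longleftrightarrow>
     finite V \<and> (\<forall>e\<in>E. e \<subseteq> V \<and> card e = 2) \<and>
     linear_order_on V rV \<and> rV \<subseteq> V \<times> V \<and>
     linear_order_on E rE \<and> rE \<subseteq> E \<times> E"

text \<open>The j-th vertex (0-based) in the vertex order.\<close>
definition vtx :: "'v set \<Rightarrow> ('v \<times> 'v) set \<Rightarrow> nat \<Rightarrow> 'v" where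
  "vtx V rV j = (THE v. v \<in> V \<and> card {u \<in> V. (u, v) \<in> rV \<and> u \<noteq> v} = j)"

text \<open>The k-th position (0-based) in lex order on \<nat> \<times> V, rows starting at 1.\<close>
definition pos :: "'v set \<Rightarrow> ('v \<times> 'v) set \<Rightarrow> nat \<Rightarrow> nat \<times> 'v" where
  "pos V rV k = (k div card V + 1, vtx V rV (k mod card V))"

definition rE_greatest :: "('v set \<times> 'v set) set \<Rightarrow> 'v set set \<Rightarrow> 'v set" where
  "rE_greatest rE C = (THE e. e \<in> C \<and> (\<forall>e'\<in>C. (e', e) \<in> rE))"

text \<open>entered V E rV rE k: set of edges entered in the first k positions;
  entry V E rV rE k: content of the k-th position (None = blank).\<close>
fun entered :: "'v set \<Rightarrow> 'v set set \<Rightarrow> ('v \<times> 'v) set \<Rightarrow> ('v set \<times> 'v set) set \<Rightarrow> nat \<Rightarrow> 'v set set"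
  where
  "entered V E rV rE 0 = {}"
| "entered V E rV rE (Suc k) =
     (let C = {e \<in> E. snd (pos V rV k) \<in> e \<and> e \<notin> entered V E rV rE k}
      in if C = {} then entered V E rV rE k else insert (rE_greatest rE C) (entered V E rV rE k))"

definition entry :: "'v set \<Rightarrow> 'v set set \<Rightarrow> ('v \<times> 'v) set \<Rightarrow> ('v set \<times> 'v set) set \<Rightarrow> nat \<Rightarrow> 'v set option"
  where
  "entry V E rV rE k =
     (let C = {e \<in> E. snd (pos V rV k) \<in> e \<and> e \<notin> entered V E rV rE k}
      in if C = {} then None else Some (rE_greatest rE C))"

definition HT :: "'v set \<Rightarrow> 'v set set \<Rightarrow> ('v \<times> 'v) set \<Rightarrow> ('v set \<times> 'v set) set \<Rightarrow> nat \<times> 'v \<Rightarrow> 'v set option"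
  where
  "HT V E rV rE p = (if (\<exists>k. pos V rV k = p) then entry V E rV rE (THE k. pos V rV k = p) else None)"

text \<open>ht_G(e) = (h_G(e), v_G(e)): the position of e in the height table.\<close>
definition ht :: "'v set \<Rightarrow> 'v set set \<Rightarrow> ('v \<times> 'v) set \<Rightarrow> ('v set \<times> 'v set) set \<Rightarrow> 'v set \<Rightarrow> nat \<times> 'v"
  where
  "ht V E rV rE e = (THE p. fst p \<ge> 1 \<and> snd p \<in> V \<and> HT V E rV rE p = Some e)"

definition hrow :: "'v set \<Rightarrow> 'v set set \<Rightarrow> ('v \<times> 'v) set \<Rightarrow> ('v set \<times> 'v set) set \<Rightarrow> 'v set \<Rightarrow> nat"
  where "hrow V E rV rE e = fst (ht V E rV rE e)"

definition hcol :: "'v set \<Rightarrow> 'v set set \<Rightarrow> ('v \<times> 'v) set \<Rightarrow> ('v set \<times> 'v set) set \<Rightarrow> 'v set \<Rightarrow> 'v"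
  where "hcol V E rV rE e = snd (ht V E rV rE e)"

definition lex_less :: "('v \<times> 'v) set \<Rightarrow> nat \<times> 'v \<Rightarrow> nat \<times> 'v \<Rightarrow> bool" where
  "lex_less rV p q \<longleftrightarrow> fst p < fst q \<or> (fst p = fst q \<and> (snd p, snd q) \<in> rV \<and> snd p \<noteq> snd q)"

end

theory Submission
  imports Defs
begin

context
  fixes V :: "'v set" and E rV rE
  assumes G: "ordered_graph V E rV rE"
begin

definition "rk v = card {u\<in>V. (u, v) \<in> rV \<and> u \<noteq> v}"

lemma finV: "finite V" using G by (simp add: ordered_graph_def)
lemma E_sub: "e \<in> E \<Longrightarrow> e \<subseteq> V \<and> card e = 2" using G by (simp add: ordered_graph_def)
lemma finE: "finite E"
proof -
  have "E \<subseteq> Pow V" using E_sub by auto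
  thus ?thesis using finV by (meson finite_Pow_iff finite_subset)
qed

lemma rV_props: "trans rV" "antisym rV" "total_on V rV"
  using G by (auto simp: ordered_graph_def order_on_defs)
lemma rE_props: "trans rE" "antisym rE" "total_on E rE" "refl_on E rE"
  using G by (auto simp: ordered_graph_def order_on_defs)

lemma rk_less: assumes "u \<in> V" "v \<in> V" "(u,v) \<in> rV" "u \<noteq> v" shows "rk u < rk v"
proof -
  have "{w\<in>V. (w, u) \<in> rV \<and> w \<noteq> u} \<subset> {w\<in>V. (w, v) \<in> rV \<and> w \<noteq> v}"
  proof
    show "{w\<in>V. (w, u) \<in> rV \<and> w \<noteq> u} \<subseteq> {w\<in>V. (w, v) \<in> rV \<and> w \<noteq> v}"
      using assms rV_props(1,2) by (auto dest: transD antisymD)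
    show "{w\<in>V. (w, u) \<in> rV \<and> w \<noteq> u} \<noteq> {w\<in>V. (w, v) \<in> rV \<and> w \<noteq> v}"
      using assms by auto
  qed
  thus ?thesis unfolding rk_def using finV by (simp add: psubset_card_mono)
qed

lemma rk_inj: "inj_on rk V"
proof (rule inj_onI, rule ccontr)
  fix u v assume "u \<in> V" "v \<in> V" "rk u = rk v" "u \<noteq> v"
  thus False using rV_props(3) rk_less unfolding total_on_def by (metis less_irrefl)
qed

lemma rk_lt: "v \<in> V \<Longrightarrow> rk v < card V"
proof -
  assume v: "v \<in> V"
  have "{u\<in>V. (u, v) \<in> rV \<and> u \<noteq> v} \<subset> V" using v by auto
  thus ?thesis unfolding rk_def using finV by (simp add: psubset_card_mono)
qed

lemma rk_img: "rk ` V = {0..<card V}"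
proof -
  have "rk ` V \<subseteq> {0..<card V}" using rk_lt by auto
  moreover have "card (rk ` V) = card {0..<card V}" using rk_inj by (simp add: card_image)
  ultimately show ?thesis by (simp add: card_subset_eq)
qed

lemma vtx_rk: "v \<in> V \<Longrightarrow> vtx V rV (rk v) = v"
  unfolding vtx_def rk_def[symmetric]
  by (rule the_equality) (auto dest: inj_onD[OF rk_inj])

lemma vtx_in: "j < card V \<Longrightarrow> vtx V rV j \<in> V \<and> rk (vtx V rV j) = j"
proof -
  assume "j < card V"
  then obtain v where "v \<in> V" "rk v = j" using rk_img by (metis atLeastLessThan_iff imageE zero_le)
  thus ?thesis using vtx_rk by auto
qed

lemma cardV_pos: "E \<noteq> {} \<Longrightarrow> card V > 0"
proof -
  assume "E \<noteq> {}" then obtain e where "e \<in> E" by auto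
  hence "e \<subseteq> V" "card e = 2" using E_sub by auto
  thus ?thesis using finV by (metis card_gt_0_iff card.empty finite_subset subset_empty zero_neq_numeral)
qed

lemma pos_inj: assumes "card V > 0" "pos V rV k = pos V rV k'" shows "k = k'"
proof -
  have d: "k div card V = k' div card V" using assms by (simp add: pos_def)
  have "vtx V rV (k mod card V) = vtx V rV (k' mod card V)" using assms by (simp add: pos_def)
  hence "k mod card V = k' mod card V" using vtx_in assms(1) by (metis mod_less_divisor)
  thus ?thesis using d by (metis div_mod_decomp)
qed

lemma pos_surj: assumes "card V > 0" "fst p \<ge> 1" "snd p \<in> V"
  shows "p = pos V rV ((fst p - 1) * card V + rk (snd p))"
proof -
  have r: "rk (snd p) < card V" using rk_lt assms by auto
  show ?thesis unfolding pos_def using r assms vtx_rk[OF assms(3)]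
    by (cases p) auto
qed

lemma pos_lex: assumes "card V > 0" "lex_less rV (pos V rV k) (pos V rV k')" shows "k < k'"
proof (rule ccontr)
  assume "\<not> k < k'"
  hence le: "k' \<le> k" by simp
  hence dle: "k' div card V \<le> k div card V" by (simp add: div_le_mono)
  show False
  proof (cases "k' div card V < k div card V")
    case True thus False using assms(2) by (simp add: lex_less_def pos_def)
  next
    case False
    hence deq: "k' div card V = k div card V" using dle by simp
    hence "k' mod card V \<le> k mod card V" using le by (metis div_mult_mod_eq add_le_cancel_left)
    moreover have "(vtx V rV (k mod card V), vtx V rV (k' mod card V)) \<in> rV"
      "vtx V rV (k mod card V) \<noteq> vtx V rV (k' mod card V)"
      using assms(2) deq by (auto simp: lex_less_def pos_def)
    ultimately show False using rk_less vtx_in assms(1) by (metis mod_less_divisor not_le)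
  qed
qed

lemma snd_pos: "card V > 0 \<Longrightarrow> snd (pos V rV k) \<in> V"
  by (simp add: pos_def vtx_in)

lemma greatest: assumes "C \<subseteq> E" "C \<noteq> {}"
  shows "rE_greatest rE C \<in> C \<and> (\<forall>e'\<in>C. (e', rE_greatest rE C) \<in> rE)"
proof -
  have fC: "finite C" using assms finE finite_subset by auto
  have "\<exists>g\<in>C. \<forall>e'\<in>C. (e', g) \<in> rE" using fC assms(2) assms(1)
  proof (induction C rule: finite_ne_induct)
    case (singleton x) thus ?case using rE_props(4) by (auto simp: refl_on_def)
  next
    case (insert x F)
    then obtain g where g: "g \<in> F" "\<forall>e'\<in>F. (e', g) \<in> rE" by auto
    show ?case
    proof (cases "(x, g) \<in> rE")
      case True thus ?thesis using g by auto
    next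
      case False
      hence "(g, x) \<in> rE" using rE_props(3) insert.prems g(1) unfolding total_on_def
        by (metis insert_subset rE_props(4) refl_on_def subsetD)
      thus ?thesis using g rE_props(1,4) insert.prems
        by (auto simp: refl_on_def dest: transD intro!: bexI[of _ x])
    qed
  qed
  then obtain g where g: "g \<in> C" "\<forall>e'\<in>C. (e', g) \<in> rE" by auto
  have "rE_greatest rE C = g" unfolding rE_greatest_def
    by (rule the_equality) (use g rE_props(2) in \<open>auto dest: antisymD\<close>)
  thus ?thesis using g by simp
qed

lemma entered_E: "entered V E rV rE k \<subseteq> E"
proof (induction k)
  case (Suc k)
  define C where "C = {e \<in> E. snd (pos V rV k) \<in> e \<and> e \<notin> entered V E rV rE k}"
  have "C \<subseteq> E" by (auto simp: C_def)
  hence "C \<noteq> {} \<Longrightarrow> rE_greatest rE C \<in> E" using greatest by blast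
  thus ?case using Suc by (simp add: C_def[symmetric] Let_def)
qed simp

lemma entered_mono: "k \<le> k' \<Longrightarrow> entered V E rV rE k \<subseteq> entered V E rV rE k'"
proof (induction k' rule: dec_induct)
  case (step n) thus ?case by (auto simp: Let_def)
qed simp

lemma entry_Some: "entry V E rV rE k = Some e \<Longrightarrow>
   e \<notin> entered V E rV rE k \<and> e \<in> entered V E rV rE (Suc k) \<and> e \<in> E \<and> snd (pos V rV k) \<in> e"
proof -
  assume a: "entry V E rV rE k = Some e"
  define C where "C = {e \<in> E. snd (pos V rV k) \<in> e \<and> e \<notin> entered V E rV rE k}"
  have "C \<noteq> {}" and "e = rE_greatest rE C" using a by (auto simp: entry_def C_def Let_def split: if_splits)
  moreover have "C \<subseteq> E" by (auto simp: C_def)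
  ultimately have "e \<in> C" using greatest by auto
  thus ?thesis using \<open>e = _\<close> \<open>C \<noteq> {}\<close> by (simp add: C_def[symmetric] Let_def) (auto simp: C_def)
qed

lemma entry_uniq: "entry V E rV rE k = Some e \<Longrightarrow> entry V E rV rE k' = Some e \<Longrightarrow> k = k'"
proof (rule ccontr)
  assume a: "entry V E rV rE k = Some e" "entry V E rV rE k' = Some e" "k \<noteq> k'"
  { fix a b assume "entry V E rV rE a = Some e" "entry V E rV rE b = Some e" "a < b"
    hence False using entry_Some[of a e] entry_Some[of b e] entered_mono[of "Suc a" b] by (meson Suc_leI subsetD) }
  thus False using a by (metis linorder_neqE_nat)
qed

lemma entered_entry: "e \<in> entered V E rV rE k \<Longrightarrow> \<exists>k'. entry V E rV rE k' = Some e"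
proof (induction k)
  case (Suc k)
  show ?case
  proof (cases "e \<in> entered V E rV rE k")
    case True thus ?thesis using Suc by auto
  next
    case False
    thus ?thesis using Suc.prems by (auto simp: Let_def entry_def split: if_splits)
  qed
qed simp

lemma entry_exists: assumes "e \<in> E" shows "\<exists>k. entry V E rV rE k = Some e"
proof (rule ccontr)
  assume na: "\<not> ?thesis"
  hence ne: "\<And>k. e \<notin> entered V E rV rE k" using entered_entry by blast
  have n: "card V > 0" using cardV_pos assms by auto
  obtain a where a: "a \<in> e" using E_sub[OF assms] by (metis card.empty ex_in_conv zero_neq_numeral)
  have aV: "a \<in> V" using a E_sub[OF assms] by auto
  define kk where "kk r = r * card V + rk a" for r
  have sp: "snd (pos V rV (kk r)) = a" for r
    using rk_lt[OF aV] vtx_rk[OF aV] by (simp add: kk_def pos_def)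
  have step: "card (entered V E rV rE (Suc (kk r))) = Suc (card (entered V E rV rE (kk r)))" for r
  proof -
    define C where "C = {e \<in> E. snd (pos V rV (kk r)) \<in> e \<and> e \<notin> entered V E rV rE (kk r)}"
    have "e \<in> C" using assms a sp ne by (auto simp: C_def)
    hence "C \<noteq> {}" by auto
    moreover have "C \<subseteq> E" by (auto simp: C_def)
    ultimately have "rE_greatest rE C \<in> C" using greatest by auto
    hence "rE_greatest rE C \<notin> entered V E rV rE (kk r)" by (auto simp: C_def)
    moreover have "finite (entered V E rV rE (kk r))" using entered_E finE finite_subset by blast
    ultimately show ?thesis using \<open>C \<noteq> {}\<close> by (simp add: C_def[symmetric] Let_def)
  qed
  have "card (entered V E rV rE (Suc (kk r))) \<ge> Suc r" for r
  proof (induction r)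
    case 0 thus ?case using step by simp
  next
    case (Suc r)
    have "Suc (kk r) \<le> kk (Suc r)" using n by (simp add: kk_def)
    hence "card (entered V E rV rE (Suc (kk r))) \<le> card (entered V E rV rE (kk (Suc r)))"
      using entered_mono entered_E finE by (meson card_mono finite_subset)
    thus ?case using Suc step[of "Suc r"] by simp
  qed
  moreover have "card (entered V E rV rE k) \<le> card E" for k using entered_E finE by (simp add: card_mono)
  ultimately show False by (metis not_less_eq_eq)
qed

lemma ht_pos: assumes "entry V E rV rE k = Some e" shows "ht V E rV rE e = pos V rV k"
proof -
  have eE: "e \<in> E" using entry_Some assms by auto
  hence n: "card V > 0" using cardV_pos by auto
  have HTp: "HT V E rV rE (pos V rV k') = entry V E rV rE k'" for k'
  proof -
    have "(THE k. pos V rV k = pos V rV k') = k'" using pos_inj[OF n] by blast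
    thus ?thesis by (auto simp: HT_def)
  qed
  show ?thesis unfolding ht_def
  proof (rule the_equality)
    show "1 \<le> fst (pos V rV k) \<and> snd (pos V rV k) \<in> V \<and> HT V E rV rE (pos V rV k) = Some e"
      using snd_pos[OF n] HTp assms by (simp add: pos_def)
  next
    fix p assume p: "1 \<le> fst p \<and> snd p \<in> V \<and> HT V E rV rE p = Some e"
    then obtain k' where "p = pos V rV k'" using pos_surj[OF n] by blast
    thus "p = pos V rV k" using p HTp assms entry_uniq by metis
  qed
qed

end

theorem mainTheorem10:
  assumes G: "ordered_graph V E rV rE"
    and eE: "e \<in> E" and fE: "f \<in> E"
    and ve: "hcol V E rV rE f \<in> e" and vf: "hcol V E rV rE f \<in> f"
    and lt: "lex_less rV (ht V E rV rE f) (ht V E rV rE e)"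
  shows "(e, f) \<in> rE \<and> e \<noteq> f"
proof -
  have n: "card V > 0" using cardV_pos[OF G] eE by auto
  obtain ke where ke: "entry V E rV rE ke = Some e" using entry_exists[OF G eE] by auto
  obtain kf where kf: "entry V E rV rE kf = Some f" using entry_exists[OF G fE] by auto
  have hte: "ht V E rV rE e = pos V rV ke" and htf: "ht V E rV rE f = pos V rV kf"
    using ht_pos[OF G] ke kf by auto
  have lt': "kf < ke" using pos_lex[OF G n] lt hte htf by simp
  have w: "snd (pos V rV kf) \<in> e" using ve htf by (simp add: hcol_def)
  have "e \<notin> entered V E rV rE ke" using entry_Some[OF G ke] by simp
  hence ne: "e \<notin> entered V E rV rE kf" using entered_mono[OF G, of kf ke] lt' by auto
  define C where "C = {e \<in> E. snd (pos V rV kf) \<in> e \<and> e \<notin> entered V E rV rE kf}"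
  have eC: "e \<in> C" using eE w ne by (simp add: C_def)
  hence "f = rE_greatest rE C" using kf by (auto simp: entry_def C_def[symmetric] Let_def split: if_splits)
  moreover have "C \<subseteq> E" by (auto simp: C_def)
  ultimately have "(e, f) \<in> rE" using greatest[OF G] eC by blast
  moreover have "e \<noteq> f" using entry_uniq[OF G ke] kf lt' by auto
  ultimately show ?thesis by simp
qed

end
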